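(* Let $D_1,D_2\subseteq\mathbb{N}$. If $D_1\cup D_2$ is accessible, then $D_1$ is accessible or $D_2$ is accessible.
   Context: For $D\subseteq\mathbb{N}$, a $k$-term $D$-diffsequence is a sequence of integers $x_1,\dots,x_k$ with $x_{i+1}-x_i\in D$ for all $i$. $D$ is accessible if for every $r\in\mathbb{N}$, every $r$-coloring of $\mathbb{N}$ and every $k\ge1$ there is a monochromatic $k$-term $D$-diffsequence in $\mathbb{N}$. *)

theory Defs
  imports Main
begin

text \<open>Natural numbers N are the positive integers {1,2,...}; subsets of N are
  modelled as sets of type nat set not containing 0.\<close>

definition posnat_set :: "nat set \<Rightarrow> bool" where
  "posnat_set D \<longleftrightarrow> D \<subseteq> {1..}"

definition diffseq :: "nat set \<Rightarrow> nat \<Rightarrow> (nat \<Rightarrow> nat) \<Rightarrow> bool" where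
  "diffseq D k x \<longleftrightarrow> (\<forall>i<k. 1 \<le> x i) \<and>
     (\<forall>i. Suc i < k \<longrightarrow> (\<exists>d\<in>D. x (Suc i) = x i + d))"

definition accessible :: "nat set \<Rightarrow> bool" where
  "accessible D \<longleftrightarrow>
     (\<forall>r::nat. \<forall>c::nat \<Rightarrow> nat. (\<forall>n\<ge>1. c n < r) \<longrightarrow>
        (\<forall>k\<ge>1. \<exists>x. diffseq D k x \<and> (\<forall>i<k. \<forall>j<k. c (x i) = c (x j))))"

end

theory Submission
  imports Defs
begin

lemma key:
  assumes "\<not> accessible D"
  shows "\<exists>(r::nat) (c::nat\<Rightarrow>nat) (a::nat\<Rightarrow>nat) (K::nat). (\<forall>n\<ge>1. c n < r) \<and> (\<forall>n\<ge>1. a n < K) \<and>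
     (\<forall>n d. n \<ge> 1 \<longrightarrow> d \<in> D \<longrightarrow> c (n+d) = c n \<longrightarrow> a n < a (n+d))"
proof -
  from assms obtain r k :: nat and c :: "nat \<Rightarrow> nat" where cr: "\<forall>n\<ge>1. c n < r" and k: "k \<ge> 1"
    and nomono': "\<forall>x. diffseq D k x \<longrightarrow> \<not> (\<forall>i<k. \<forall>j<k. c (x i) = c (x j))"
    unfolding accessible_def by blast
  have nomono: "\<not> (\<forall>i<k. \<forall>j<k. c (x i) = c (x j))" if "diffseq D k x" for x
    using nomono' that by blast
  define P where "P n m \<longleftrightarrow> m \<ge> 1 \<and> (\<exists>x. diffseq D m x \<and> x (m-1) = n \<and> (\<forall>i<m. c (x i) = c n))" for n m
  have bound: "m < k" if "P n m" for n m
  proof (rule ccontr)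
    assume "\<not> m < k"
    from that obtain x where x: "diffseq D m x" "\<forall>i<m. c (x i) = c n" unfolding P_def by blast
    have "diffseq D k x" using x(1) \<open>\<not> m < k\<close> unfolding diffseq_def by auto
    moreover have "\<forall>i<k. \<forall>j<k. c (x i) = c (x j)" using x(2) \<open>\<not> m < k\<close> by auto
    ultimately show False using nomono by blast
  qed
  have P1: "P n 1" if "n \<ge> 1" for n
    unfolding P_def diffseq_def using that by (intro conjI exI[of _ "\<lambda>_. n"]) auto
  define a where "a n = (GREATEST m. P n m)" for n
  have bk: "y \<le> k" if "P n y" for n y
    using bound[OF that] by simp
  have aP: "P n (a n)" if "n \<ge> 1" for n
    unfolding a_def by (rule GreatestI_nat[of "P n", OF P1[OF that] bk])
  have ale: "m \<le> a n" if "P n m" for n m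
    unfolding a_def by (rule Greatest_le_nat[of "P n", OF that bk])
  have ext: "P (n+d) (Suc m)" if "P n m" "d \<in> D" "c (n+d) = c n" for n m d
  proof -
    from that(1) obtain x where m: "m \<ge> 1" and x: "diffseq D m x" "x (m-1) = n" "\<forall>i<m. c (x i) = c n"
      unfolding P_def by blast
    define y where "y = x(m := n+d)"
    have "diffseq D (Suc m) y"
      unfolding diffseq_def
    proof (intro conjI allI impI)
      fix i assume "i < Suc m"
      have pos: "\<forall>i<m. 1 \<le> x i" using x(1) unfolding diffseq_def by blast
      show "1 \<le> y i"
      proof (cases "i = m")
        case True
        have "m - 1 < m" using m by simp
        then have "1 \<le> x (m-1)" using pos by blast
        then show ?thesis using True x(2) unfolding y_def by simp
      next
        case False
        then have "i < m" using \<open>i < Suc m\<close> by simp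
        then show ?thesis using pos False unfolding y_def by simp
      qed
    next
      fix i assume i: "Suc i < Suc m"
      show "\<exists>d\<in>D. y (Suc i) = y i + d"
      proof (cases "Suc i = m")
        case True
        then show ?thesis using that(2) x(2) unfolding y_def by auto
      next
        case False
        then have "Suc i < m" using i by auto
        then show ?thesis using x(1) unfolding y_def diffseq_def by auto
      qed
    qed
    moreover have "y (Suc m - 1) = n + d" unfolding y_def by simp
    moreover have "\<forall>i<Suc m. c (y i) = c (n+d)" using x(3) that(3) unfolding y_def by auto
    ultimately show ?thesis unfolding P_def by (intro conjI exI[of _ y]) simp_all
  qed
  have f1: "\<forall>n\<ge>1. c n < r" using cr by blast
  have f2: "\<forall>n\<ge>1. a n < k"
  proof (intro allI impI)
    fix n :: nat assume "1 \<le> n"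
    show "a n < k" using bound[OF aP[OF \<open>1 \<le> n\<close>]] by simp
  qed
  have f3: "\<forall>n d. n \<ge> 1 \<longrightarrow> d \<in> D \<longrightarrow> c (n+d) = c n \<longrightarrow> a n < a (n+d)"
  proof (intro allI impI)
    fix n d assume h: "1 \<le> n" "d \<in> D" "c (n+d) = c n"
    then have "P (n+d) (Suc (a n))" using ext[OF aP[OF h(1)]] by blast
    then have "Suc (a n) \<le> a (n+d)" by (rule ale)
    then show "a n < a (n+d)" by simp
  qed
  show ?thesis
    by (intro exI[of _ r] exI[of _ c] exI[of _ a] exI[of _ k] conjI f1 f2 f3)
qed

theorem mainTheorem12:
  fixes D1 D2 :: "nat set"
  assumes "posnat_set D1" and "posnat_set D2"
    and "accessible (D1 \<union> D2)"
  shows "accessible D1 \<or> accessible D2"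
proof (rule ccontr)
  assume "\<not> (accessible D1 \<or> accessible D2)"
  then have n1: "\<not> accessible D1" and n2: "\<not> accessible D2" by auto
  obtain r1 K1 :: nat and c1 a1 :: "nat \<Rightarrow> nat" where
    h1: "\<forall>n\<ge>1. c1 n < r1" "\<forall>n\<ge>1. a1 n < K1"
      "\<forall>n d. n \<ge> 1 \<longrightarrow> d \<in> D1 \<longrightarrow> c1 (n+d) = c1 n \<longrightarrow> a1 n < a1 (n+d)"
    using key[OF n1] by (elim exE conjE) blast
  obtain r2 K2 :: nat and c2 a2 :: "nat \<Rightarrow> nat" where
    h2: "\<forall>n\<ge>1. c2 n < r2" "\<forall>n\<ge>1. a2 n < K2"
      "\<forall>n d. n \<ge> 1 \<longrightarrow> d \<in> D2 \<longrightarrow> c2 (n+d) = c2 n \<longrightarrow> a2 n < a2 (n+d)"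
    using key[OF n2] by (elim exE conjE) blast
  define S where "S = {..<r1} \<times> {..<r2} \<times> {..<K1} \<times> {..<K2}"
  define f where "f n = (c1 n, c2 n, a1 n, a2 n)" for n
  have fS: "f n \<in> S" if "n \<ge> 1" for n using h1 h2 that unfolding S_def f_def by auto
  have "finite S" unfolding S_def by auto
  then obtain g where g: "bij_betw g S {0..<card S}" using ex_bij_betw_finite_nat by blast
  define c where "c n = g (f n)" for n
  have "\<forall>n\<ge>1. c n < card S" 
  proof (intro allI impI)
    fix n :: nat assume "1 \<le> n"
    then have "g (f n) \<in> {0..<card S}" using bij_betw_apply[OF g fS] by blast
    then show "c n < card S" unfolding c_def by simp
  qed
  then have "\<exists>x. diffseq (D1 \<union> D2) 2 x \<and> (\<forall>i<2. \<forall>j<2. c (x i) = c (x j))"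
    using assms(3) unfolding accessible_def by simp
  then obtain x where x: "diffseq (D1 \<union> D2) 2 x" and m: "\<forall>i<(2::nat). \<forall>j<2. c (x i) = c (x j)"
    by blast
  have x0: "x 0 \<ge> 1" and x1: "x 1 \<ge> 1" using x unfolding diffseq_def by auto
  obtain d where d: "d \<in> D1 \<union> D2" "x 1 = x 0 + d" using x unfolding diffseq_def by fastforce
  have "c (x 0) = c (x 1)" using m by simp
  then have "g (f (x 0)) = g (f (x 1))" unfolding c_def by simp
  then have "f (x 0) = f (x 1)" using g fS[OF x0] fS[OF x1] unfolding bij_betw_def inj_on_def by blast
  then have e1: "c1 (x 0 + d) = c1 (x 0)" "a1 (x 0 + d) = a1 (x 0)" "c2 (x 0 + d) = c2 (x 0)" "a2 (x 0 + d) = a2 (x 0)"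
    using d(2) unfolding f_def by auto
  show False
  proof (cases "d \<in> D1")
    case True
    then show False using h1(3) x0 e1 by fastforce
  next
    case False
    then have "d \<in> D2" using d(1) by blast
    then show False using h2(3) x0 e1 by fastforce
  qed
qed

end
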